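(* Let $\mathcal{D}\subset\mathbb{R}^d$ be bounded and convex with non-empty interior. Assume $\mathcal{C}\subset\Gamma\backslash G$ is compact and $\theta>\overline\rho(\mathcal{C},\mathcal{D}\times(0,1])$. Then \[F(M,t)\leq\theta^{d+1}\] for all $M$ with $\Gamma M\in\mathcal{C}D(\theta)^{-1}$ and all $t\in\mathcal{D}$.
   Context: Let $G=\operatorname{SL}(d+1,\mathbb{R})$ and $\Gamma=\operatorname{SL}(d+1,\mathbb{Z})$; vectors are row vectors and $\mathbb{Z}^{d+1}M$ is the lattice spanned by the rows of $M$. For $M\in G$, $t\in\mathcal{D}$: $F(M,t)=\min\{y>0\mid (x,y)\in\mathbb{Z}^{d+1}M,\ x+t\in\mathcal{D}\}$ ($x\in\mathbb{R}^d$, $y\in\mathbb{R}$), and $\infty$ if no minimum exists. For a bounded $\mathcal{A}\subset\mathbb{R}^{d+1}$ with non-empty interior, the covering radius is $\rho(M,\mathcal{A})=\inf\{\theta>0\mid \theta\mathcal{A}+\mathbb{Z}^{d+1}M=\mathbb{R}^{d+1}\}$, and for $\mathcal{C}\subset\Gamma\backslash G$, $\overline\rho(\mathcal{C},\mathcal{A})=\sup_{\Gamma M\in\mathcal{C}}\rho(M,\mathcal{A})$. For $\theta>0$, $D(\theta)=\operatorname{diag}(\theta,\ldots,\theta,\theta^{-d})\in G$ (with $d$ entries $\theta$), and $\mathcal{C}D(\theta)^{-1}=\{\Gamma MD(\theta)^{-1}\mid \Gamma M\in\mathcal{C}\}$. *)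

theory Defs
  imports "HOL-Analysis.Analysis"
begin

text \<open>Dimension: the index type 'n has d = CARD('n) elements; R^(d+1) is
  real^('n + unit), the coordinate Inr () being the last coordinate y, the
  coordinates Inl i forming x in R^d.  Vectors are row vectors: v v* M.\<close>

type_synonym 'n mat1 = "real^('n + unit)^('n + unit)"

definition SLR :: "('n::finite) mat1 set" where
  "SLR = {M. det M = 1}"

definition SLZ :: "('n::finite) mat1 set" where
  "SLZ = {M. det M = 1 \<and> (\<forall>i j. M $ i $ j \<in> \<int>)}"

definition coset :: "('n::finite) mat1 \<Rightarrow> ('n mat1) set" where
  "coset M = {g ** M | g. g \<in> SLZ}"

definition quotSL :: "('n::finite) mat1 set set" where
  "quotSL = coset ` SLR"

definition quot_top :: "('n::finite) mat1 set topology" where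
  "quot_top = topology (\<lambda>U. U \<subseteq> quotSL \<and>
       openin (top_of_set SLR) {M \<in> SLR. coset M \<in> U})"



lemma istopology_quot:
  "istopology (\<lambda>U. U \<subseteq> (quotSL::('n::finite) mat1 set set) \<and>
       openin (top_of_set SLR) {M \<in> SLR. coset M \<in> U})"
  unfolding istopology_def
proof (rule conjI; intro allI impI)
  fix S T :: "'n mat1 set set"
  assume a: "S \<subseteq> quotSL \<and> openin (top_of_set SLR) {M \<in> SLR. coset M \<in> S}"
     and b: "T \<subseteq> quotSL \<and> openin (top_of_set SLR) {M \<in> SLR. coset M \<in> T}"
  have e: "{M \<in> SLR. coset M \<in> S \<inter> T} = {M \<in> SLR. coset M \<in> S} \<inter> {M \<in> SLR. coset M \<in> T}" by auto
  show "S \<inter> T \<subseteq> quotSL \<and> openin (top_of_set SLR) {M \<in> SLR. coset M \<in> S \<inter> T}"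
    using a b unfolding e by (simp add: le_infI1 openin_Int)
next
  fix K :: "'n mat1 set set set"
  assume "\<forall>S\<in>K. S \<subseteq> quotSL \<and> openin (top_of_set SLR) {M \<in> SLR. coset M \<in> S}"
  moreover have eq: "{M \<in> SLR. coset M \<in> \<Union>K} = (\<Union>S\<in>K. {M \<in> SLR. coset M \<in> S})" by auto
  ultimately have "openin (top_of_set SLR) (\<Union>S\<in>K. {M \<in> SLR. coset M \<in> S})"
    by (intro openin_Union) auto
  with \<open>\<forall>S\<in>K. _\<close> eq show "\<Union>K \<subseteq> quotSL \<and> openin (top_of_set SLR) {M \<in> SLR. coset M \<in> \<Union>K}"
    by auto
qed

definition lattice :: "('n::finite) mat1 \<Rightarrow> (real^('n + unit)) set" where
  "lattice M = {v v* M | v. \<forall>i. v $ i \<in> \<int>}"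

definition xpart :: "real^('n::finite + unit) \<Rightarrow> real^'n" where
  "xpart v = (\<chi> i. v $ Inl i)"

definition ypart :: "real^('n::finite + unit) \<Rightarrow> real" where
  "ypart v = v $ Inr ()"

definition Fset :: "('n::finite) mat1 \<Rightarrow> (real^'n) set \<Rightarrow> real^'n \<Rightarrow> real set" where
  "Fset M D t = {y. y > 0 \<and> (\<exists>v \<in> lattice M. ypart v = y \<and> xpart v + t \<in> D)}"

definition Ffun :: "('n::finite) mat1 \<Rightarrow> (real^'n) set \<Rightarrow> real^'n \<Rightarrow> ereal" where
  "Ffun M D t = (if \<exists>y \<in> Fset M D t. \<forall>z \<in> Fset M D t. y \<le> z
                 then ereal (Inf (Fset M D t)) else \<infinity>)"

definition covrad :: "('n::finite) mat1 \<Rightarrow> (real^('n + unit)) set \<Rightarrow> real" where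
  "covrad M A = Inf {\<theta>. \<theta> > 0 \<and> {a + l | a l. a \<in> (\<lambda>x. \<theta> *\<^sub>R x) ` A \<and> l \<in> lattice M} = UNIV}"

definition covrad_sup :: "('n::finite) mat1 set set \<Rightarrow> (real^('n + unit)) set \<Rightarrow> ereal" where
  "covrad_sup C A = (SUP c \<in> C. SUP M \<in> c. ereal (covrad M A))"

definition Dmat :: "real \<Rightarrow> ('n::finite) mat1" where
  "Dmat \<theta> = (\<chi> i j. if i = j then (case i of Inl _ \<Rightarrow> \<theta> | Inr _ \<Rightarrow> \<theta> powr (- real CARD('n))) else 0)"

definition cyl :: "(real^'n) set \<Rightarrow> (real^('n::finite + unit)) set" where
  "cyl D = {v. xpart v \<in> D \<and> 0 < ypart v \<and> ypart v \<le> 1}"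

end

theory Submission
  imports Defs "HOL-Library.FuncSet"
begin

lemma finite_int_vecs: "finite {u::real^'m::finite. \<forall>i. u$i \<in> \<int> \<and> \<bar>u$i\<bar> \<le> R}"
proof -
  define S where "S = (of_int :: int \<Rightarrow> real) ` {-\<lceil>R\<rceil>..\<lceil>R\<rceil>}"
  have fS: "finite S" unfolding S_def by simp
  have "{u::real^'m. \<forall>i. u$i \<in> \<int> \<and> \<bar>u$i\<bar> \<le> R} \<subseteq> vec_lambda ` (PiE UNIV (\<lambda>_. S))"
  proof
    fix u :: "real^'m" assume u: "u \<in> {u. \<forall>i. u$i \<in> \<int> \<and> \<bar>u$i\<bar> \<le> R}"
    have "\<And>i. u$i \<in> S"
    proof -
      fix i
      from u have "u$i \<in> \<int>" "\<bar>u$i\<bar> \<le> R" by auto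
      then obtain k where k: "u$i = of_int k" by (auto elim: Ints_cases)
      with \<open>\<bar>u$i\<bar> \<le> R\<close> have "\<bar>real_of_int k\<bar> \<le> R" by simp
      hence "k \<in> {-\<lceil>R\<rceil>..\<lceil>R\<rceil>}" by (auto simp: abs_le_iff) linarith+
      thus "u$i \<in> S" unfolding S_def k by blast
    qed
    hence "(\<lambda>i. u$i) \<in> PiE UNIV (\<lambda>_. S)" by (simp add: PiE_UNIV_domain)
    moreover have "u = vec_lambda (\<lambda>i. u$i)" by simp
    ultimately show "u \<in> vec_lambda ` (PiE UNIV (\<lambda>_. S))" by blast
  qed
  moreover have "finite (vec_lambda ` (PiE UNIV (\<lambda>_. S)))"
    using fS by (intro finite_imageI finite_PiE) auto
  ultimately show ?thesis by (rule finite_subset)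
qed

lemma inv_right: "invertible (M::real^'a^'a) \<Longrightarrow> M ** matrix_inv M = mat 1 \<and> matrix_inv M ** M = mat 1"
  unfolding invertible_def matrix_inv_def by (rule someI_ex)

lemma lattice_finite:
  fixes M :: "('n::finite) mat1"
  assumes "invertible M"
  shows "finite {w \<in> lattice M. \<forall>i. \<bar>w$i\<bar> \<le> R}"
proof -
  define Mi where "Mi = matrix_inv M"
  have MMi: "M ** Mi = mat 1" using inv_right[OF assms] Mi_def by simp
  define K where "K = (\<Sum>i\<in>UNIV. \<Sum>j\<in>UNIV. \<bar>Mi$i$j\<bar>)"
  have K0: "0 \<le> K" unfolding K_def by (intro sum_nonneg) auto
  have "{w \<in> lattice M. \<forall>i. \<bar>w$i\<bar> \<le> R} \<subseteq> (\<lambda>u. u v* M) ` {u. \<forall>i. u$i \<in> \<int> \<and> \<bar>u$i\<bar> \<le> K * max R 0}"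
  proof
    fix w assume w: "w \<in> {w \<in> lattice M. \<forall>i. \<bar>w$i\<bar> \<le> R}"
    then obtain u where u: "w = u v* M" "\<forall>i. u$i \<in> \<int>" unfolding lattice_def by auto
    have uw: "u = w v* Mi" using u(1) MMi by (simp add: vector_matrix_mul_assoc)
    have "\<forall>j. \<bar>u$j\<bar> \<le> K * max R 0"
    proof
      fix j
      have "\<bar>u$j\<bar> = \<bar>\<Sum>i\<in>UNIV. Mi$i$j * w$i\<bar>" unfolding uw vector_matrix_mult_def by (simp add: mult.commute)
      also have "\<dots> \<le> (\<Sum>i\<in>UNIV. \<bar>Mi$i$j\<bar> * max R 0)"
        by (rule order_trans[OF sum_abs], rule sum_mono)
           (use w in \<open>auto simp: abs_mult intro!: mult_left_mono intro: max.coboundedI1\<close>)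
      also have "\<dots> = (\<Sum>i\<in>UNIV. \<bar>Mi$i$j\<bar>) * max R 0" by (simp add: sum_distrib_right)
      also have "\<dots> \<le> K * max R 0"
      proof (rule mult_right_mono)
        have "(\<Sum>i\<in>UNIV. \<bar>Mi$i$j\<bar>) = (\<Sum>i\<in>UNIV. \<Sum>j'\<in>{j}. \<bar>Mi$i$j'\<bar>)" by simp
        also have "\<dots> \<le> K" unfolding K_def by (intro sum_mono sum_mono2) auto
        finally show "(\<Sum>i\<in>UNIV. \<bar>Mi$i$j\<bar>) \<le> K" .
      qed simp
      finally show "\<bar>u$j\<bar> \<le> K * max R 0" .
    qed
    with u show "w \<in> (\<lambda>u. u v* M) ` {u. \<forall>i. u$i \<in> \<int> \<and> \<bar>u$i\<bar> \<le> K * max R 0}" by auto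
  qed
  thus ?thesis by (rule finite_subset) (intro finite_imageI finite_int_vecs)
qed

definition diagm :: "('a::finite \<Rightarrow> real) \<Rightarrow> real^'a^'a" where
  "diagm f = (\<chi> i j. if i = j then f i else 0)"

lemma diagm_mult: "diagm f ** diagm g = diagm (\<lambda>i. f i * g i)"
proof -
  have "\<And>i j. (\<Sum>k\<in>UNIV. (if i = k then f i else 0) * (if k = j then g k else 0)) = (if i = j then f i * g i else 0)"
  proof -
    fix i j :: 'a
    have "(\<Sum>k\<in>UNIV. (if i = k then f i else 0) * (if k = j then g k else 0)) = (\<Sum>k\<in>UNIV. if k = i then f i * (if k = j then g k else 0) else 0)"
      by (rule sum.cong) auto
    also have "\<dots> = (if i = j then f i * g i else 0)" by (simp add: sum.delta)
    finally show "?thesis i j" .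
  qed
  thus ?thesis unfolding diagm_def matrix_matrix_mult_def by (simp add: vec_eq_iff)
qed

lemma vm_diagm: "(w v* diagm f) $ j = w $ j * f j"
proof -
  have "(\<Sum>i\<in>UNIV. (if i = j then f i else 0) * w $ i) = (\<Sum>i\<in>UNIV. if i = j then f j * w $ j else 0)"
    by (rule sum.cong) auto
  thus ?thesis unfolding diagm_def vector_matrix_mult_def by (simp add: mult.commute)
qed

lemma mat1_diagm: "mat 1 = diagm (\<lambda>i. 1)"
  unfolding diagm_def mat_def by simp

lemma matrix_inv_unique:
  fixes A B :: "real^'a^'a"
  assumes "A ** B = mat 1" "B ** A = mat 1"
  shows "matrix_inv A = B"
proof -
  have "invertible A" using assms unfolding invertible_def by blast
  from inv_right[OF this] have "matrix_inv A ** A = mat 1" by simp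
  hence "matrix_inv A = (matrix_inv A ** A) ** B"
    by (metis assms(1) matrix_mul_assoc matrix_mul_rid)
  thus ?thesis using \<open>matrix_inv A ** A = mat 1\<close> by simp
qed

definition Emat :: "real \<Rightarrow> ('n::finite) mat1" where
  "Emat \<theta> = diagm (\<lambda>i. case i of Inl _ \<Rightarrow> 1 / \<theta> | Inr _ \<Rightarrow> \<theta> powr real CARD('n))"

lemma Dmat_diagm: "(Dmat \<theta> :: ('n::finite) mat1) = diagm (\<lambda>i. case i of Inl _ \<Rightarrow> \<theta> | Inr _ \<Rightarrow> \<theta> powr (- real CARD('n)))"
  unfolding Dmat_def diagm_def by simp

lemma Dmat_inv:
  assumes "\<theta> > 0"
  shows "matrix_inv (Dmat \<theta> :: ('n::finite) mat1) = Emat \<theta>"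
proof (rule matrix_inv_unique)
  have e: "\<And>i::'n+unit. (case i of Inl _ \<Rightarrow> \<theta> | Inr _ \<Rightarrow> \<theta> powr (- real CARD('n))) *
     (case i of Inl _ \<Rightarrow> 1 / \<theta> | Inr _ \<Rightarrow> \<theta> powr real CARD('n)) = 1"
    using assms by (auto split: sum.split simp: powr_minus field_simps)
  show "Dmat \<theta> ** Emat \<theta> = (mat 1 :: 'n mat1)"
    unfolding Dmat_diagm Emat_def diagm_mult e mat1_diagm ..
  have e2: "\<And>i::'n+unit. (case i of Inl _ \<Rightarrow> 1 / \<theta> | Inr _ \<Rightarrow> \<theta> powr real CARD('n)) *
     (case i of Inl _ \<Rightarrow> \<theta> | Inr _ \<Rightarrow> \<theta> powr (- real CARD('n))) = 1"
    using e by (simp add: mult.commute)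
  show "Emat \<theta> ** Dmat \<theta> = (mat 1 :: 'n mat1)"
    unfolding Dmat_diagm Emat_def diagm_mult e2 mat1_diagm ..
qed

lemma convex_cyl:
  assumes "convex D"
  shows "convex (cyl D)"
proof (rule convexI)
  fix x y :: "real^('a::finite+unit)" and u v :: real
  assume x: "x \<in> cyl D" and y: "y \<in> cyl D" and u: "0 \<le> u" and v: "0 \<le> v" and uv: "u + v = 1"
  have xp: "xpart (u *\<^sub>R x + v *\<^sub>R y) = u *\<^sub>R xpart x + v *\<^sub>R xpart y"
    unfolding xpart_def by (simp add: vec_eq_iff)
  have yp: "ypart (u *\<^sub>R x + v *\<^sub>R y) = u * ypart x + v * ypart y"
    unfolding ypart_def by simp
  from x y have x1: "xpart x \<in> D" "0 < ypart x" "ypart x \<le> 1"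
    and y1: "xpart y \<in> D" "0 < ypart y" "ypart y \<le> 1" unfolding cyl_def by auto
  have "u *\<^sub>R xpart x + v *\<^sub>R xpart y \<in> D" using assms x1 y1 u v uv by (simp add: convexD)
  moreover have "0 < u * ypart x + v * ypart y"
  proof (cases "u = 0")
    case True thus ?thesis using uv y1 by simp
  next
    case False thus ?thesis using u v x1 y1 by (simp add: add_pos_nonneg)
  qed
  moreover have "u * ypart x + v * ypart y \<le> 1"
  proof -
    have "u * ypart x \<le> u" using u x1 by (simp add: mult_left_le)
    moreover have "v * ypart y \<le> v" using v y1 by (simp add: mult_left_le)
    ultimately show ?thesis using uv by linarith
  qed
  ultimately show "u *\<^sub>R x + v *\<^sub>R y \<in> cyl D" unfolding cyl_def mem_Collect_eq xp yp by simp
qed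

lemma lattice_neg: "l \<in> lattice N \<Longrightarrow> - l \<in> lattice N"
proof -
  assume "l \<in> lattice N"
  then obtain u where u: "l = u v* N" "\<forall>i. u$i \<in> \<int>" unfolding lattice_def by auto
  have "- l = (- u) v* N" unfolding u(1) using vector_matrix_mult_diff_distrib[of 0 u N] by simp
  moreover have "\<forall>i. (-u)$i \<in> \<int>" using u(2) by simp
  ultimately show ?thesis unfolding lattice_def by blast
qed

lemma cover_exists:
  fixes N :: "('n::finite) mat1" and D :: "(real^'n) set"
  assumes "invertible N" "ball c r \<subseteq> D" "r > 0"
  shows "\<exists>\<theta>>0. {a + l | a l. a \<in> (\<lambda>x. \<theta> *\<^sub>R x) ` cyl D \<and> l \<in> lattice N} = UNIV"
proof -
  define astar :: "real^('n+unit)" where "astar = (\<chi> j. case j of Inl i \<Rightarrow> c$i | Inr _ \<Rightarrow> 1/2)"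
  define \<epsilon> where "\<epsilon> = min (r/(2*real CARD('n))) (1/4)"
  have e0: "\<epsilon> > 0" unfolding \<epsilon>_def using assms(3) by simp
  have box: "a \<in> cyl D" if a: "\<forall>j. \<bar>(a - astar)$j\<bar> \<le> \<epsilon>" for a
  proof -
    have "norm (xpart a - c) \<le> (\<Sum>i\<in>UNIV. \<bar>(xpart a - c)$i\<bar>)" by (rule norm_le_l1_cart)
    also have "\<dots> = (\<Sum>i\<in>UNIV. \<bar>(a - astar)$Inl i\<bar>)" unfolding xpart_def astar_def by simp
    also have "\<dots> \<le> (\<Sum>i\<in>(UNIV::'n set). \<epsilon>)" using a by (intro sum_mono) auto
    also have "\<dots> = real CARD('n) * \<epsilon>" by simp
    also have "\<dots> \<le> real CARD('n) * (r/(2*real CARD('n)))" unfolding \<epsilon>_def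
      by (intro mult_left_mono) auto
    also have "\<dots> = r/2" by simp
    also have "\<dots> < r" using assms(3) by simp
    finally have "xpart a \<in> ball c r" by (simp add: dist_norm norm_minus_commute)
    hence "xpart a \<in> D" using assms(2) by blast
    moreover have "\<bar>a$Inr () - 1/2\<bar> \<le> 1/4" using a[rule_format, of "Inr ()"] unfolding \<epsilon>_def astar_def by simp
    ultimately show ?thesis unfolding cyl_def ypart_def by (auto simp: abs_le_iff; linarith)
  qed
  define K where "K = (\<Sum>i\<in>UNIV. \<Sum>j\<in>UNIV. \<bar>N$i$j\<bar>)"
  have K0: "0 \<le> K" unfolding K_def by (intro sum_nonneg) auto
  define \<theta> where "\<theta> = (K+1)/\<epsilon>"
  have t0: "\<theta> > 0" unfolding \<theta>_def using e0 K0 by simp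
  define Ni where "Ni = matrix_inv N"
  have NiN: "Ni ** N = mat 1" using inv_right[OF assms(1)] Ni_def by simp
  have "p \<in> {a + l | a l. a \<in> (\<lambda>x. \<theta> *\<^sub>R x) ` cyl D \<and> l \<in> lattice N}" for p
  proof -
    define u where "u = (p - \<theta> *\<^sub>R astar) v* Ni"
    define fl :: "real^('n+unit)" where "fl = (\<chi> i. real_of_int \<lfloor>u$i\<rfloor>)"
    define l where "l = fl v* N"
    define f where "f = (u - fl) v* N"
    have "p - \<theta> *\<^sub>R astar = u v* N" unfolding u_def vector_matrix_mul_assoc NiN by simp
    also have "\<dots> = l + f" unfolding l_def f_def by (simp add: vector_matrix_mult_diff_distrib)
    finally have pe: "p = \<theta> *\<^sub>R astar + f + l" by (simp add: algebra_simps)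
    have lL: "l \<in> lattice N" unfolding l_def lattice_def fl_def by auto
    define a where "a = astar + (1/\<theta>) *\<^sub>R f"
    have ta: "\<theta> *\<^sub>R a = \<theta> *\<^sub>R astar + f" unfolding a_def using t0 by (simp add: algebra_simps)
    have fj: "\<bar>f$j\<bar> \<le> K" for j
    proof -
      have "\<bar>f$j\<bar> = \<bar>\<Sum>i\<in>UNIV. N$i$j * (u - fl)$i\<bar>" unfolding f_def vector_matrix_mult_def by (simp add: mult.commute)
      also have "\<dots> \<le> (\<Sum>i\<in>UNIV. \<bar>N$i$j\<bar>)"
      proof (rule order_trans[OF sum_abs], rule sum_mono)
        fix i
        have "0 \<le> (u - fl)$i" "(u - fl)$i \<le> 1" unfolding fl_def by simp_all linarith
        thus "\<bar>N$i$j * (u - fl)$i\<bar> \<le> \<bar>N$i$j\<bar>" by (simp add: abs_mult mult_left_le)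
      qed
      also have "\<dots> = (\<Sum>i\<in>UNIV. \<Sum>j'\<in>{j}. \<bar>N$i$j'\<bar>)" by simp
      also have "\<dots> \<le> K" unfolding K_def by (intro sum_mono sum_mono2) auto
      finally show ?thesis .
    qed
    have "\<forall>j. \<bar>(a - astar)$j\<bar> \<le> \<epsilon>"
    proof
      fix j
      have "\<bar>(a - astar)$j\<bar> = \<bar>f$j\<bar> / \<theta>" unfolding a_def using t0 by simp
      also have "\<dots> \<le> K / \<theta>" using fj t0 by (simp add: divide_right_mono)
      also have "\<dots> \<le> \<epsilon>" unfolding \<theta>_def using e0 K0 by (simp add: field_simps)
      finally show "\<bar>(a - astar)$j\<bar> \<le> \<epsilon>" .
    qed
    hence "a \<in> cyl D" by (rule box)
    with lL pe ta show ?thesis by force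
  qed
  thus ?thesis using t0 by blast
qed

lemma core:
  fixes N :: "('n::finite) mat1" and D :: "(real^'n) set"
  assumes cov: "{a + l | a l. a \<in> (\<lambda>x. \<theta>' *\<^sub>R x) ` cyl D \<and> l \<in> lattice N} = UNIV"
    and t0: "0 < \<theta>'" and tt: "\<theta>' < \<theta>" and cD: "convex D" and a0: "a0 \<in> cyl D"
  shows "\<exists>w \<in> lattice N. \<exists>b \<in> cyl D. w = \<theta> *\<^sub>R b - q"
proof -
  have "q - (\<theta> - \<theta>') *\<^sub>R a0 \<in> {a + l | a l. a \<in> (\<lambda>x. \<theta>' *\<^sub>R x) ` cyl D \<and> l \<in> lattice N}"
    using cov by simp
  then obtain a l where al: "a \<in> cyl D" "l \<in> lattice N" "q - (\<theta> - \<theta>') *\<^sub>R a0 = \<theta>' *\<^sub>R a + l"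
    by blast
  define b where "b = (\<theta>'/\<theta>) *\<^sub>R a + (1 - \<theta>'/\<theta>) *\<^sub>R a0"
  have "b \<in> cyl D" unfolding b_def
    using convexD[OF convex_cyl[OF cD] al(1) a0, of "\<theta>'/\<theta>" "1 - \<theta>'/\<theta>"] t0 tt by simp
  moreover have "\<theta> *\<^sub>R b = \<theta>' *\<^sub>R a + (\<theta> - \<theta>') *\<^sub>R a0"
    unfolding b_def using t0 tt by (simp add: algebra_simps)
  moreover have "q = \<theta>' *\<^sub>R a + l + (\<theta> - \<theta>') *\<^sub>R a0" using al(3) by (simp add: diff_eq_eq)
  ultimately have "- l = \<theta> *\<^sub>R b - q" by simp
  then show ?thesis using lattice_neg[OF al(2)] \<open>b \<in> cyl D\<close> by metis
qed

lemma Ffun_le: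
  fixes M :: "('n::finite) mat1" and D :: "(real^'n) set"
  assumes inv: "invertible M" and bD: "bounded D" and y0: "y0 \<in> Fset M D t"
  shows "Ffun M D t \<le> ereal y0"
proof -
  obtain R where R: "\<And>x. x \<in> D \<Longrightarrow> norm x \<le> R" using bD unfolding bounded_iff by blast
  define F' where "F' = Fset M D t \<inter> {..y0}"
  have "F' \<subseteq> ypart ` {w \<in> lattice M. \<forall>i. \<bar>w$i\<bar> \<le> max y0 (R + norm t)}"
  proof
    fix y assume y: "y \<in> F'"
    then obtain v where v: "v \<in> lattice M" "ypart v = y" "xpart v + t \<in> D" "0 < y" "y \<le> y0"
      unfolding F'_def Fset_def by auto
    have "\<forall>i. \<bar>v$i\<bar> \<le> max y0 (R + norm t)"
    proof
      fix i show "\<bar>v$i\<bar> \<le> max y0 (R + norm t)"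
      proof (cases i)
        case (Inl k)
        have "\<bar>v$i\<bar> = \<bar>xpart v $ k\<bar>" unfolding Inl xpart_def by simp
        also have "\<dots> \<le> norm (xpart v)" by (rule component_le_norm_cart)
        also have "\<dots> \<le> norm (xpart v + t) + norm t" by (metis add_diff_cancel norm_triangle_ineq4)
        also have "\<dots> \<le> R + norm t" using R[OF v(3)] by simp
        finally show ?thesis by simp
      next
        case (Inr k)
        hence "v$i = y" using v(2) unfolding ypart_def by simp
        thus ?thesis using v by simp
      qed
    qed
    thus "y \<in> ypart ` {w \<in> lattice M. \<forall>i. \<bar>w$i\<bar> \<le> max y0 (R + norm t)}" using v by blast
  qed
  hence fin: "finite F'" by (rule finite_subset) (intro finite_imageI lattice_finite[OF inv])
  have y0F: "y0 \<in> F'" unfolding F'_def using y0 by simp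
  define m where "m = Min F'"
  have mF: "m \<in> Fset M D t" "m \<le> y0" unfolding m_def using fin y0F Min_in[OF fin] Min_le[OF fin y0F]
    by (auto simp: F'_def)
  have mle: "\<forall>z \<in> Fset M D t. m \<le> z"
  proof
    fix z assume z: "z \<in> Fset M D t"
    show "m \<le> z"
    proof (cases "z \<le> y0")
      case True thus ?thesis unfolding m_def using z fin by (auto simp: F'_def intro: Min_le)
    next
      case False thus ?thesis using mF by simp
    qed
  qed
  have "Inf (Fset M D t) = m" using mF(1) mle by (intro cInf_eq_minimum) auto
  hence "Ffun M D t = ereal m" unfolding Ffun_def using mF(1) mle by auto
  thus ?thesis using mF(2) by simp
qed

theorem proposition2p3:
  fixes D :: "(real^'n::finite) set" and C :: "('n mat1) set set" and \<theta> :: real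
  assumes "bounded D" and "convex D" and "interior D \<noteq> {}"
    and "C \<subseteq> quotSL" and "compactin quot_top C"
    and "ereal \<theta> > covrad_sup C (cyl D)"
  shows "\<forall>M \<in> SLR. \<forall>t \<in> D.
           coset M \<in> {coset (N ** matrix_inv (Dmat \<theta>)) | N. N \<in> SLR \<and> coset N \<in> C}
           \<longrightarrow> Ffun M D t \<le> ereal (\<theta> ^ (CARD('n) + 1))"
proof (intro ballI impI)
  fix M t assume M: "M \<in> SLR" and t: "t \<in> D"
    and mem: "coset M \<in> {coset (N ** matrix_inv (Dmat \<theta>)) | N. N \<in> SLR \<and> coset N \<in> C}"
  from mem obtain N where N: "coset M = coset (N ** matrix_inv (Dmat \<theta>))" "N \<in> SLR" "coset N \<in> C"
    by blast
  have I: "(mat 1 :: 'n mat1) \<in> SLZ" unfolding SLZ_def by (simp add: det_I) (simp add: mat_def)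
  have selfc: "X \<in> coset X" for X :: "'n mat1"
    unfolding coset_def using I by (metis (mono_tags, lifting) matrix_mul_lid mem_Collect_eq)
  have "ereal (covrad N (cyl D)) \<le> covrad_sup C (cyl D)" unfolding covrad_sup_def
    by (rule SUP_upper2[OF N(3)]) (rule SUP_upper[OF selfc])
  hence "ereal (covrad N (cyl D)) < ereal \<theta>" using assms(6) by (rule le_less_trans)
  hence lt: "covrad N (cyl D) < \<theta>" by simp
  have invN: "invertible N" using N(2) by (simp add: SLR_def invertible_det_nz)
  have invM: "invertible M" using M by (simp add: SLR_def invertible_det_nz)
  obtain x0 where "x0 \<in> interior D" using assms(3) by blast
  then obtain r where r: "r > 0" "ball x0 r \<subseteq> D" by (meson mem_interior)
  define S where "S = {\<theta>. \<theta> > 0 \<and> {a + l | a l. a \<in> (\<lambda>x. \<theta> *\<^sub>R x) ` cyl D \<and> l \<in> lattice N} = UNIV}"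
  have Sne: "S \<noteq> {}" using cover_exists[OF invN r(2) r(1)] unfolding S_def by blast
  have "Inf S < \<theta>" using lt unfolding covrad_def S_def .
  then obtain \<theta>' where th': "\<theta>' \<in> S" "\<theta>' < \<theta>" using cInf_lessD[OF Sne] by blast
  have t'0: "\<theta>' > 0" and cov: "{a + l | a l. a \<in> (\<lambda>x. \<theta>' *\<^sub>R x) ` cyl D \<and> l \<in> lattice N} = UNIV"
    using th'(1) unfolding S_def by auto
  have t0: "\<theta> > 0" using t'0 th'(2) by simp
  define a0 :: "real^('n+unit)" where "a0 = (\<chi> j. case j of Inl i \<Rightarrow> x0$i | Inr _ \<Rightarrow> 1)"
  have "xpart a0 = x0" unfolding a0_def xpart_def by (simp add: vec_eq_iff)
  hence a0D: "a0 \<in> cyl D" using r unfolding cyl_def ypart_def a0_def by auto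
  define q :: "real^('n+unit)" where "q = (\<chi> j. case j of Inl i \<Rightarrow> \<theta> * t$i | Inr _ \<Rightarrow> 0)"
  obtain w b where wb: "w \<in> lattice N" "b \<in> cyl D" "w = \<theta> *\<^sub>R b - q"
    using core[OF cov t'0 th'(2) assms(2) a0D, of q] by blast
  define E where "E = (Emat \<theta> :: 'n mat1)"
  have ME: "matrix_inv (Dmat \<theta>) = E" unfolding E_def using Dmat_inv[OF t0] .
  have "N ** E \<in> coset M" unfolding N(1) ME by (rule selfc)
  then obtain h where h: "N ** E = h ** M" "h \<in> SLZ" unfolding coset_def by blast
  obtain u where u: "w = u v* N" "\<forall>i. u$i \<in> \<int>" using wb(1) unfolding lattice_def by blast
  define w' where "w' = w v* E"
  have "w' = (u v* h) v* M" unfolding w'_def u(1) vector_matrix_mul_assoc h(1) ..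
  moreover have "\<forall>j. (u v* h)$j \<in> \<int>"
    using u(2) h(2) unfolding vector_matrix_mult_def SLZ_def
    by (auto intro!: Ints_sum Ints_mult)
  ultimately have w'L: "w' \<in> lattice M" unfolding lattice_def by blast
  have "xpart w' + t = xpart b"
    unfolding w'_def E_def Emat_def xpart_def
    by (simp add: vec_eq_iff vm_diagm wb(3) q_def) (use t0 in \<open>simp add: field_simps\<close>)
  hence xD: "xpart w' + t \<in> D" using wb(2) unfolding cyl_def by simp
  have "ypart w' = ypart b * \<theta> ^ (CARD('n) + 1)"
    unfolding w'_def E_def Emat_def ypart_def
    by (simp add: vm_diagm wb(3) q_def powr_realpow[OF t0])
  moreover have "0 < ypart b" "ypart b \<le> 1" using wb(2) unfolding cyl_def by auto
  ultimately have y1: "0 < ypart w'" "ypart w' \<le> \<theta> ^ (CARD('n) + 1)"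
    using t0 by (simp_all add: mult_le_cancel_right1)
  have "ypart w' \<in> Fset M D t" unfolding Fset_def using y1 w'L xD by blast
  from Ffun_le[OF invM assms(1) this] y1(2) show "Ffun M D t \<le> ereal (\<theta> ^ (CARD('n) + 1))"
    by (meson ereal_less_eq(3) order_trans)
qed

end
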